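(* The deterministic greedy algorithm, which assigns each arriving item $i$ to a bidder $j$ maximizing the marginal value $f_j(S_j\cup\{i\})-f_j(S_j)$ (where $S_j$ is the set of items assigned to bidder $j$ so far) if this maximum marginal value is non-negative and discards $i$ otherwise, achieves a competitive ratio of approximately $0.27493$ (namely $\frac{1}{\sqrt5}\big(e^{-ax^*}-e^{-bx^*}\big)$ with $a=\frac{3-\sqrt5}{2}$, $b=\frac{3+\sqrt5}{2}$, $x^*=\frac{\ln(b/a)}{\sqrt5}$) for online Submodular Welfare in the random order setting with general (not necessarily monotone) non-negative submodular utilities; i.e., for every instance, the expected value (over the uniformly random arrival order) of the greedy allocation is at least this constant times the optimal offline value.
   Context: A set function $f:2^{\mathcal N}\to\mathbb R_{\ge 0}$ is submodular if $f(A\cup B)+f(A\cap B)\le f(A)+f(B)$ for all $A,B\subseteq\mathcal N$. Online Submodular Welfare: there are $n$ bidders, bidder $j$ having a non-negative submodular (not necessarily monotone) utility $f_j$ over a set $\mathcal N$ of $m$ items that arrive one by one. When an item arrives, the algorithm must immediately and irrevocably assign it to one bidder or discard it; the goal is to maximize $\sum_j f_j(S_j)$ where the sets $S_j$ of items assigned to the bidders are pairwise disjoint. The optimal offline value is $\max\{\sum_j f_j(O_j): O_1,\dots,O_n\subseteq\mathcal N\text{ pairwise disjoint}\}$. In the random order setting the items arrive in a uniformly random order. *)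

theory Defs
  imports "HOL-Analysis.Analysis" "HOL-Combinatorics.Multiset_Permutations"
begin

definition submodular_on :: "'a set \<Rightarrow> ('a set \<Rightarrow> real) \<Rightarrow> bool" where
  "submodular_on N g \<longleftrightarrow>
     (\<forall>A B. A \<subseteq> N \<longrightarrow> B \<subseteq> N \<longrightarrow> g (A \<union> B) + g (A \<inter> B) \<le> g A + g B)"

definition marginal :: "(nat \<Rightarrow> 'a set \<Rightarrow> real) \<Rightarrow> (nat \<Rightarrow> 'a set) \<Rightarrow> nat \<Rightarrow> 'a \<Rightarrow> real" where
  "marginal f S j i = f j (S j \<union> {i}) - f j (S j)"

text \<open>A tie-breaking rule for the greedy algorithm (bidders are 0..<n).  It receives the
  list of items that arrived before, the current allocation and the arriving item, and
  returns Some j (assign to j) or None (discard).\<close>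
definition greedy_rule ::
  "nat \<Rightarrow> (nat \<Rightarrow> 'a set \<Rightarrow> real) \<Rightarrow> ('a list \<Rightarrow> (nat \<Rightarrow> 'a set) \<Rightarrow> 'a \<Rightarrow> nat option) \<Rightarrow> bool" where
  "greedy_rule n f ch \<longleftrightarrow>
     (\<forall>pre S i.
        (ch pre S i = None \<longleftrightarrow> (\<forall>j<n. marginal f S j i < 0)) \<and>
        (\<forall>j. ch pre S i = Some j \<longrightarrow>
              j < n \<and> 0 \<le> marginal f S j i \<and> (\<forall>k<n. marginal f S k i \<le> marginal f S j i)))"

fun greedy_aux ::
  "('a list \<Rightarrow> (nat \<Rightarrow> 'a set) \<Rightarrow> 'a \<Rightarrow> nat option) \<Rightarrow> 'a list \<Rightarrow> (nat \<Rightarrow> 'a set) \<Rightarrow> 'a list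
     \<Rightarrow> (nat \<Rightarrow> 'a set)" where
  "greedy_aux ch pre S [] = S"
| "greedy_aux ch pre S (i # xs) =
     greedy_aux ch (pre @ [i])
       (case ch pre S i of None \<Rightarrow> S | Some j \<Rightarrow> S(j := S j \<union> {i})) xs"

definition greedy_alloc ::
  "('a list \<Rightarrow> (nat \<Rightarrow> 'a set) \<Rightarrow> 'a \<Rightarrow> nat option) \<Rightarrow> 'a list \<Rightarrow> (nat \<Rightarrow> 'a set)" where
  "greedy_alloc ch xs = greedy_aux ch [] (\<lambda>_. {}) xs"

definition welfare :: "nat \<Rightarrow> (nat \<Rightarrow> 'a set \<Rightarrow> real) \<Rightarrow> (nat \<Rightarrow> 'a set) \<Rightarrow> real" where
  "welfare n f S = (\<Sum>j<n. f j (S j))"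

definition expected_greedy ::
  "'a set \<Rightarrow> nat \<Rightarrow> (nat \<Rightarrow> 'a set \<Rightarrow> real) \<Rightarrow> ('a list \<Rightarrow> (nat \<Rightarrow> 'a set) \<Rightarrow> 'a \<Rightarrow> nat option) \<Rightarrow> real" where
  "expected_greedy N n f ch =
     (\<Sum>xs\<in>permutations_of_set N. welfare n f (greedy_alloc ch xs))
       / real (card (permutations_of_set N))"

definition greedy_ratio :: real where
  "greedy_ratio =
     (let a = (3 - sqrt 5) / 2; b = (3 + sqrt 5) / 2; x = ln (b / a) / sqrt 5
      in (exp (- a * x) - exp (- b * x)) / sqrt 5)"

end

theory Submission
  imports Defs
begin

lemma submod_marg_mono:
  assumes sm: "submodular_on N g" and "A \<subseteq> B" "B \<subseteq> N" "i \<in> N" "i \<notin> B"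
  shows "g (B \<union> {i}) - g B \<le> g (A \<union> {i}) - g A"
proof -
  have "A \<union> {i} \<subseteq> N" using assms by auto
  then have "g ((A \<union> {i}) \<union> B) + g ((A \<union> {i}) \<inter> B) \<le> g (A \<union> {i}) + g B"
    using sm assms unfolding submodular_on_def by blast
  moreover have "(A \<union> {i}) \<union> B = B \<union> {i}" using assms by auto
  moreover have "(A \<union> {i}) \<inter> B = A" using assms by auto
  ultimately show ?thesis by simp
qed

lemma submod_sum_marg:
  assumes sm: "submodular_on N g" and "finite X" "X \<subseteq> N" "S \<subseteq> N" "X \<inter> S = {}"
  shows "g (S \<union> X) - g S \<le> (\<Sum>i\<in>X. g (S \<union> {i}) - g S)"
  using assms(2-5)
proof (induction X rule: finite_induct)
  case empty then show ?case by simp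
next
  case (insert x X)
  have "g (S \<union> X \<union> {x}) - g (S \<union> X) \<le> g (S \<union> {x}) - g S"
    using submod_marg_mono[OF sm, of S "S \<union> X" x] insert by auto
  moreover have "S \<union> insert x X = S \<union> X \<union> {x}" by auto
  ultimately show ?case using insert by simp
qed

definition upd :: "(nat \<Rightarrow> 'a set) \<Rightarrow> nat option \<Rightarrow> 'a \<Rightarrow> (nat \<Rightarrow> 'a set)" where
  "upd S c i = (case c of None \<Rightarrow> S | Some j \<Rightarrow> S(j := S j \<union> {i}))"

lemma greedy_aux_snoc:
  "greedy_aux ch pre S (xs @ [i]) =
     (let S' = greedy_aux ch pre S xs in upd S' (ch (pre @ xs) S' i) i)"
  by (induction xs arbitrary: pre S) (simp_all add: upd_def Let_def)

lemma greedy_alloc_snoc: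
  "greedy_alloc ch (xs @ [i]) = upd (greedy_alloc ch xs) (ch xs (greedy_alloc ch xs) i) i"
  by (simp add: greedy_alloc_def greedy_aux_snoc Let_def)

lemma greedy_alloc_Nil: "greedy_alloc ch [] = (\<lambda>_. {})"
  by (simp add: greedy_alloc_def)

lemma greedy_alloc_subset: "greedy_alloc ch xs j \<subseteq> set xs"
  by (induction xs rule: rev_induct)
     (auto simp: greedy_alloc_snoc upd_def greedy_alloc_Nil split: option.splits)

lemma sum_disj_le:
  fixes h :: "'a \<Rightarrow> real" and n :: nat
  assumes "finite R" "\<And>i. i \<in> R \<Longrightarrow> 0 \<le> h i"
    and "\<forall>j<n. \<forall>k<n. j \<noteq> k \<longrightarrow> Op j \<inter> Op k = {}"
  shows "(\<Sum>j<n. \<Sum>i\<in>Op j \<inter> R. h i) \<le> (\<Sum>i\<in>R. h i)"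
proof -
  have "(\<Sum>j<n. \<Sum>i\<in>Op j \<inter> R. h i) = (\<Sum>i\<in>(\<Union>j\<in>{..<n}. Op j \<inter> R). h i)"
    by (rule sum.UNION_disjoint[symmetric]) (use assms in auto)
  also have "\<dots> \<le> (\<Sum>i\<in>R. h i)"
    by (rule sum_mono2) (use assms in auto)
  finally show ?thesis .
qed

locale setting =
  fixes N :: "'a set" and n :: nat and f :: "nat \<Rightarrow> 'a set \<Rightarrow> real"
    and ch :: "'a list \<Rightarrow> (nat \<Rightarrow> 'a set) \<Rightarrow> 'a \<Rightarrow> nat option"
    and Opt :: "nat \<Rightarrow> 'a set"
  assumes finN: "finite N"
    and sub: "\<forall>j<n. submodular_on N (f j)"
    and nonneg: "\<forall>j<n. \<forall>A\<subseteq>N. 0 \<le> f j A"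
    and gr: "greedy_rule n f ch"
    and optN: "\<forall>j<n. Opt j \<subseteq> N"
    and disj: "\<forall>j<n. \<forall>k<n. j \<noteq> k \<longrightarrow> Opt j \<inter> Opt k = {}"
begin

abbreviation st where "st \<equiv> greedy_alloc ch"
definition W where "W p = (\<Sum>j<n. f j (st p j))"
definition R where "R p = N - set p"
definition T where "T p = (\<Sum>j<n. f j (st p j \<union> (Opt j \<inter> R p)))"
definition g where "g p i = W (p @ [i]) - W p"

lemma g_eq: "g p i = (case ch p (st p) i of None \<Rightarrow> 0 | Some j \<Rightarrow> marginal f (st p) j i)"
proof (cases "ch p (st p) i")
  case None
  then show ?thesis by (simp add: g_def W_def greedy_alloc_snoc upd_def)
next
  case (Some j)
  then have jn: "j < n" using gr unfolding greedy_rule_def by blast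
  let ?S = "st p"
  have "g p i = (\<Sum>l<n. f l ((?S(j := ?S j \<union> {i})) l) - f l (?S l))"
    using Some by (simp add: g_def W_def greedy_alloc_snoc upd_def sum_subtractf)
  also have "\<dots> = (\<Sum>l<n. if l = j then f j (?S j \<union> {i}) - f j (?S j) else 0)"
    by (rule sum.cong) auto
  also have "\<dots> = marginal f ?S j i" using jn by (simp add: marginal_def)
  finally show ?thesis using Some by simp
qed

lemma g_ge: "0 \<le> g p i" "j < n \<Longrightarrow> marginal f (st p) j i \<le> g p i"
proof -
  have G: "(ch p (st p) i = None \<longleftrightarrow> (\<forall>j<n. marginal f (st p) j i < 0)) \<and>
        (\<forall>j. ch p (st p) i = Some j \<longrightarrow>
              j < n \<and> 0 \<le> marginal f (st p) j i \<and> (\<forall>k<n. marginal f (st p) k i \<le> marginal f (st p) j i))"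
    using gr unfolding greedy_rule_def by blast
  show "0 \<le> g p i"
    using G by (cases "ch p (st p) i") (auto simp: g_eq)
  show "j < n \<Longrightarrow> marginal f (st p) j i \<le> g p i"
    using G by (cases "ch p (st p) i") (auto simp: g_eq less_imp_le)
qed

lemma st_subN: "set p \<subseteq> N \<Longrightarrow> st p j \<subseteq> N"
  using greedy_alloc_subset[of ch p j] by (meson subset_trans)

lemma W_nonneg: "set p \<subseteq> N \<Longrightarrow> 0 \<le> W p"
  unfolding W_def using nonneg st_subN by (auto intro!: sum_nonneg)

lemma T_nonneg: "set p \<subseteq> N \<Longrightarrow> 0 \<le> T p"
proof -
  assume a: "set p \<subseteq> N"
  show ?thesis unfolding T_def
  proof (rule sum_nonneg)
    fix j assume "j \<in> {..<n}"
    moreover have "st p j \<union> (Opt j \<inter> R p) \<subseteq> N" using st_subN[OF a, of j] by (auto simp: R_def)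
    ultimately show "0 \<le> f j (st p j \<union> (Opt j \<inter> R p))" using nonneg by auto
  qed
qed

lemma finR: "finite (R p)" using finN by (simp add: R_def)

lemma B1:
  assumes "set p \<subseteq> N"
  shows "T p - W p \<le> (\<Sum>i\<in>R p. g p i)"
proof -
  let ?S = "st p"
  have "T p - W p = (\<Sum>j<n. f j (?S j \<union> (Opt j \<inter> R p)) - f j (?S j))"
    by (simp add: T_def W_def sum_subtractf)
  also have "\<dots> \<le> (\<Sum>j<n. \<Sum>i\<in>Opt j \<inter> R p. g p i)"
  proof (rule sum_mono)
    fix j assume "j \<in> {..<n}"
    then have jn: "j < n" by simp
    have "f j (?S j \<union> (Opt j \<inter> R p)) - f j (?S j)
          \<le> (\<Sum>i\<in>Opt j \<inter> R p. f j (?S j \<union> {i}) - f j (?S j))"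
      by (rule submod_sum_marg[of N]) 
         (use jn sub finR st_subN[OF assms] greedy_alloc_subset[of ch p j] in \<open>auto simp: R_def\<close>)
    also have "\<dots> \<le> (\<Sum>i\<in>Opt j \<inter> R p. g p i)"
      by (rule sum_mono) (use g_ge(2)[OF jn] in \<open>auto simp: marginal_def\<close>)
    finally show "f j (?S j \<union> (Opt j \<inter> R p)) - f j (?S j) \<le> (\<Sum>i\<in>Opt j \<inter> R p. g p i)" .
  qed
  also have "\<dots> \<le> (\<Sum>i\<in>R p. g p i)"
    by (rule sum_disj_le) (use finR g_ge(1) disj in auto)
  finally show ?thesis .
qed


lemma R_snoc: "R (p @ [i]) = R p - {i}"
  by (auto simp: R_def)

lemma B2_pt:
  assumes sp: "set p \<subseteq> N" and jn: "j < n" and iR: "i \<in> R p"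
  shows "(if ch p (st p) i = Some j \<and> i \<notin> Opt j
          then f j ((st p j \<union> (Opt j \<inter> R p)) \<union> {i}) - f j (st p j \<union> (Opt j \<inter> R p)) else 0)
         - (if i \<in> Opt j then g p i else 0)
       \<le> f j (st (p @ [i]) j \<union> (Opt j \<inter> R (p @ [i]))) - f j (st p j \<union> (Opt j \<inter> R p))"
proof -
  let ?S = "st p"
  let ?T = "?S j \<union> (Opt j \<inter> R p)"
  have iN: "i \<in> N" "i \<notin> set p" using iR by (auto simp: R_def)
  have Ssub: "?S j \<subseteq> set p" using greedy_alloc_subset[of ch p j] .
  have iS: "i \<notin> ?S j" using Ssub iN by auto
  have g0: "0 \<le> g p i" by (rule g_ge(1))
  show ?thesis
  proof (cases "ch p ?S i = Some j")
    case True
    then have st': "st (p @ [i]) j = ?S j \<union> {i}"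
      by (simp add: greedy_alloc_snoc upd_def)
    show ?thesis
    proof (cases "i \<in> Opt j")
      case True
      have "st (p @ [i]) j \<union> (Opt j \<inter> R (p @ [i])) = ?T"
        using st' True iR by (auto simp: R_snoc)
      then show ?thesis using True g0 by simp
    next
      case False
      have "st (p @ [i]) j \<union> (Opt j \<inter> R (p @ [i])) = ?T \<union> {i}"
        using st' False iR by (auto simp: R_snoc)
      then show ?thesis using False \<open>ch p ?S i = Some j\<close> by simp
    qed
  next
    case False
    then have st': "st (p @ [i]) j = ?S j"
      by (cases "ch p ?S i") (auto simp: greedy_alloc_snoc upd_def)
    show ?thesis
    proof (cases "i \<in> Opt j")
      case True
      have eq: "st (p @ [i]) j \<union> (Opt j \<inter> R (p @ [i])) = ?T - {i}"
        using st' True iR iS by (auto simp: R_snoc)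
      have Tsub: "?T - {i} \<subseteq> N" using Ssub sp by (auto simp: R_def)
      have "f j ((?T - {i}) \<union> {i}) - f j (?T - {i}) \<le> f j (?S j \<union> {i}) - f j (?S j)"
        by (rule submod_marg_mono[of N]) (use sub jn Tsub iN iS in auto)
      moreover have "(?T - {i}) \<union> {i} = ?T" using True iR by auto
      moreover have "f j (?S j \<union> {i}) - f j (?S j) \<le> g p i"
        using g_ge(2)[OF jn, of p i] by (simp add: marginal_def)
      ultimately show ?thesis using eq True False by simp
    next
      case False
      have "st (p @ [i]) j \<union> (Opt j \<inter> R (p @ [i])) = ?T"
        using st' False by (auto simp: R_snoc)
      then show ?thesis using False \<open>ch p ?S i \<noteq> Some j\<close> by simp
    qed
  qed
qed

lemma B2:
  assumes sp: "set p \<subseteq> N"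
  shows "- (\<Sum>i\<in>R p. g p i) - T p \<le> (\<Sum>i\<in>R p. T (p @ [i]) - T p)"
proof -
  define Tj where "Tj j = st p j \<union> (Opt j \<inter> R p)" for j
  define A where "A j i = (if ch p (st p) i = Some j \<and> i \<notin> Opt j
          then f j (Tj j \<union> {i}) - f j (Tj j) else 0)" for j i
  define B where "B j i = (if i \<in> Opt j then g p i else 0)" for j i
  have TjN: "Tj j \<subseteq> N" if "j < n" for j
    using st_subN[OF sp, of j] by (auto simp: Tj_def R_def)
  have "(\<Sum>i\<in>R p. T (p @ [i]) - T p)
      = (\<Sum>i\<in>R p. \<Sum>j<n. f j (st (p @ [i]) j \<union> (Opt j \<inter> R (p @ [i]))) - f j (Tj j))"
    by (simp add: T_def Tj_def sum_subtractf)
  also have "\<dots> \<ge> (\<Sum>i\<in>R p. \<Sum>j<n. A j i - B j i)"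
  proof (intro sum_mono)
    fix i j assume "i \<in> R p" "j \<in> {..<n}"
    then show "A j i - B j i \<le> f j (st (p @ [i]) j \<union> (Opt j \<inter> R (p @ [i]))) - f j (Tj j)"
      unfolding A_def B_def Tj_def using B2_pt[OF sp, of j i] by simp
  qed
  finally have 1: "(\<Sum>i\<in>R p. \<Sum>j<n. A j i - B j i) \<le> (\<Sum>i\<in>R p. T (p @ [i]) - T p)" .
  have 2: "(\<Sum>i\<in>R p. \<Sum>j<n. A j i - B j i) = (\<Sum>j<n. \<Sum>i\<in>R p. A j i) - (\<Sum>j<n. \<Sum>i\<in>R p. B j i)"
    by (simp add: sum_subtractf sum.swap[of _ "R p" "{..<n}"])
  have 3: "(\<Sum>j<n. \<Sum>i\<in>R p. B j i) \<le> (\<Sum>i\<in>R p. g p i)"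
  proof -
    have "(\<Sum>i\<in>R p. B j i) = (\<Sum>i\<in>Opt j \<inter> R p. g p i)" for j
    proof -
      have "(\<Sum>i\<in>R p. B j i) = (\<Sum>i\<in>{i\<in>R p. i \<in> Opt j}. g p i)"
        by (simp add: B_def sum.inter_filter[OF finR])
      also have "{i\<in>R p. i \<in> Opt j} = Opt j \<inter> R p" by auto
      finally show ?thesis .
    qed
    then have "(\<Sum>j<n. \<Sum>i\<in>R p. B j i) = (\<Sum>j<n. \<Sum>i\<in>Opt j \<inter> R p. g p i)" by simp
    also have "\<dots> \<le> (\<Sum>i\<in>R p. g p i)"
      by (rule sum_disj_le) (use finR g_ge(1) disj in auto)
    finally show ?thesis .
  qed
  have 4: "- T p \<le> (\<Sum>j<n. \<Sum>i\<in>R p. A j i)"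
  proof -
    have "- f j (Tj j) \<le> (\<Sum>i\<in>R p. A j i)" if jn: "j < n" for j
    proof -
      define X where "X = {i\<in>R p. ch p (st p) i = Some j \<and> i \<notin> Opt j}"
      have "(\<Sum>i\<in>R p. A j i) = (\<Sum>i\<in>X. f j (Tj j \<union> {i}) - f j (Tj j))"
        unfolding A_def X_def by (subst sum.inter_filter[OF finR]) (rule refl)
      moreover have "f j (Tj j \<union> X) - f j (Tj j) \<le> (\<Sum>i\<in>X. f j (Tj j \<union> {i}) - f j (Tj j))"
      proof (rule submod_sum_marg[of N])
        show "submodular_on N (f j)" using sub jn by auto
        show "finite X" using finR by (simp add: X_def)
        show "X \<subseteq> N" by (auto simp: X_def R_def)
        show "Tj j \<subseteq> N" by (rule TjN[OF jn])
        show "X \<inter> Tj j = {}"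
          using greedy_alloc_subset[of ch p j] by (auto simp: X_def Tj_def R_def)
      qed
      moreover have "0 \<le> f j (Tj j \<union> X)"
        using nonneg jn TjN[OF jn] by (auto simp: X_def R_def)
      ultimately show ?thesis by linarith
    qed
    then have "(\<Sum>j<n. - f j (Tj j)) \<le> (\<Sum>j<n. \<Sum>i\<in>R p. A j i)"
      by (intro sum_mono) auto
    moreover have "(\<Sum>j<n. - f j (Tj j)) = - T p"
      by (simp add: T_def Tj_def sum_negf)
    ultimately show ?thesis by simp
  qed
  show ?thesis using 1 2 3 4 by linarith
qed


definition Lk where "Lk k = {p. length p = k \<and> distinct p \<and> set p \<subseteq> N}"

lemma finLk: "finite (Lk k)"
  by (rule finite_subset[OF _ finite_lists_length_eq[OF finN, of k]]) (auto simp: Lk_def)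

lemma Lk_Suc: "Lk (Suc k) = (\<lambda>(p, i). p @ [i]) ` (SIGMA p:Lk k. N - set p)"
proof
  show "Lk (Suc k) \<subseteq> (\<lambda>(p, i). p @ [i]) ` (SIGMA p:Lk k. N - set p)"
  proof
    fix q assume "q \<in> Lk (Suc k)"
    then obtain y ys where q: "q = ys @ [y]" "length ys = k" "distinct q" "set q \<subseteq> N"
      by (auto simp: Lk_def length_Suc_conv_rev)
    then have "(ys, y) \<in> (SIGMA p:Lk k. N - set p)" by (auto simp: Lk_def)
    then show "q \<in> (\<lambda>(p, i). p @ [i]) ` (SIGMA p:Lk k. N - set p)"
      using q(1) by (auto intro!: image_eqI[where x = "(ys, y)"])
  qed
  show "(\<lambda>(p, i). p @ [i]) ` (SIGMA p:Lk k. N - set p) \<subseteq> Lk (Suc k)"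
    by (auto simp: Lk_def)
qed

lemma inj_snoc: "inj_on (\<lambda>(p, i). p @ [i]) X"
  by (rule inj_onI) auto

lemma sum_Lk_Suc: "(\<Sum>q\<in>Lk (Suc k). \<phi> q) = (\<Sum>p\<in>Lk k. \<Sum>i\<in>N - set p. \<phi> (p @ [i]))"
proof -
  have "(\<Sum>q\<in>Lk (Suc k). \<phi> q) = (\<Sum>x\<in>(SIGMA p:Lk k. N - set p). \<phi> ((\<lambda>(p, i). p @ [i]) x))"
    unfolding Lk_Suc by (subst sum.reindex[OF inj_snoc]) (simp add: comp_def)
  also have "\<dots> = (\<Sum>p\<in>Lk k. \<Sum>i\<in>N - set p. \<phi> (p @ [i]))"
    by (subst sum.Sigma) (use finLk finN in \<open>auto simp: case_prod_beta\<close>)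
  finally show ?thesis .
qed

lemma card_R: "p \<in> Lk k \<Longrightarrow> card (N - set p) = card N - k"
  by (simp add: Lk_def card_Diff_subset distinct_card)

lemma card_Lk_Suc: "card (Lk (Suc k)) = card (Lk k) * (card N - k)"
proof -
  have "card (Lk (Suc k)) = (\<Sum>q\<in>Lk (Suc k). 1)" by simp
  also have "\<dots> = (\<Sum>p\<in>Lk k. \<Sum>i\<in>N - set p. 1)" by (rule sum_Lk_Suc)
  also have "\<dots> = (\<Sum>p\<in>Lk k. card N - k)" by (intro sum.cong) (auto simp: card_R)
  finally show ?thesis by simp
qed

lemma Lk0: "Lk 0 = {[]}" by (auto simp: Lk_def)

lemma card_Lk_pos: "k \<le> card N \<Longrightarrow> 0 < card (Lk k)"
  by (induction k) (auto simp: Lk0 card_Lk_Suc)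

lemma Lk_perm: "Lk (card N) = permutations_of_set N"
proof
  show "Lk (card N) \<subseteq> permutations_of_set N"
  proof
    fix p assume p: "p \<in> Lk (card N)"
    then have "card (set p) = card N" "set p \<subseteq> N" "distinct p"
      by (auto simp: Lk_def distinct_card)
    then have "set p = N" using finN card_subset_eq by blast
    then show "p \<in> permutations_of_set N" using p by (auto simp: Lk_def permutations_of_set_def)
  qed
  show "permutations_of_set N \<subseteq> Lk (card N)"
    by (auto simp: Lk_def permutations_of_set_def distinct_card)
qed

definition Avg where "Avg k \<phi> = (\<Sum>p\<in>Lk k. \<phi> p) / real (card (Lk k))"

lemma Avg_mono: "(\<And>p. p \<in> Lk k \<Longrightarrow> \<phi> p \<le> \<psi> p) \<Longrightarrow> Avg k \<phi> \<le> Avg k \<psi>"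
  unfolding Avg_def by (intro divide_right_mono sum_mono) auto

lemma Avg_cong: "(\<And>p. p \<in> Lk k \<Longrightarrow> \<phi> p = \<psi> p) \<Longrightarrow> Avg k \<phi> = Avg k \<psi>"
  unfolding Avg_def by (metis (mono_tags, lifting) sum.cong)

lemma Avg_lin: "Avg k (\<lambda>p. a * \<phi> p + b * \<psi> p) = a * Avg k \<phi> + b * Avg k \<psi>"
  unfolding Avg_def by (simp add: sum.distrib sum_distrib_left[symmetric] add_divide_distrib)

lemma Avg_Suc:
  assumes "k < card N"
  shows "Avg (Suc k) \<phi> = Avg k (\<lambda>p. (\<Sum>i\<in>N - set p. \<phi> (p @ [i])) / real (card N - k))"
proof -
  have "Avg (Suc k) \<phi> = (\<Sum>p\<in>Lk k. \<Sum>i\<in>N - set p. \<phi> (p @ [i])) / (real (card (Lk k)) * real (card N - k))"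
    unfolding Avg_def sum_Lk_Suc card_Lk_Suc by simp
  also have "\<dots> = Avg k (\<lambda>p. (\<Sum>i\<in>N - set p. \<phi> (p @ [i])) / real (card N - k))"
    unfolding Avg_def by (simp add: sum_divide_distrib[symmetric] field_simps)
  finally show ?thesis .
qed

definition w where "w k = Avg k W"
definition v where "v k = Avg k (\<lambda>p. W p + T p)"

lemma step_W:
  assumes "p \<in> Lk k" "k < card N"
  shows "(\<Sum>i\<in>N - set p. W (p @ [i])) / real (card N - k) = W p + (\<Sum>i\<in>R p. g p i) / real (card N - k)"
proof -
  have M: "real (card N - k) > 0" using assms by simp
  have "(\<Sum>i\<in>N - set p. W (p @ [i])) = (\<Sum>i\<in>R p. W p + g p i)"
    by (simp add: R_def g_def)
  also have "\<dots> = real (card N - k) * W p + (\<Sum>i\<in>R p. g p i)"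
    using card_R[OF assms(1)] by (simp add: sum.distrib R_def)
  finally show ?thesis using M by (simp add: field_simps)
qed

lemma step_WT:
  assumes "p \<in> Lk k" "k < card N"
  shows "(\<Sum>i\<in>N - set p. W (p @ [i]) + T (p @ [i])) / real (card N - k)
     = W p + T p + ((\<Sum>i\<in>R p. g p i) + (\<Sum>i\<in>R p. T (p @ [i]) - T p)) / real (card N - k)"
proof -
  have M: "real (card N - k) > 0" using assms by simp
  have "(\<Sum>i\<in>N - set p. W (p @ [i]) + T (p @ [i])) = (\<Sum>i\<in>R p. (W p + T p) + (g p i + (T (p @ [i]) - T p)))"
    by (simp add: R_def g_def)
  also have "\<dots> = real (card (R p)) * (W p + T p) + ((\<Sum>i\<in>R p. g p i) + (\<Sum>i\<in>R p. T (p @ [i]) - T p))"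
    by (simp only: sum.distrib sum_constant) (simp add: algebra_simps)
  also have "real (card (R p)) = real (card N - k)" using card_R[OF assms(1)] by (simp add: R_def)
  finally show ?thesis using M by (simp add: field_simps)
qed

lemma Lk_sub: "p \<in> Lk k \<Longrightarrow> set p \<subseteq> N" by (simp add: Lk_def)

lemma rec_w:
  assumes "k < card N"
  shows "w k + (v k - 2 * w k) / real (card N - k) \<le> w (Suc k)"
    and "w k \<le> w (Suc k)"
proof -
  define M where "M = real (card N - k)"
  have M: "M > 0" using assms by (simp add: M_def)
  have ws: "Avg (Suc k) W = Avg k (\<lambda>p. W p + (\<Sum>i\<in>R p. g p i) / M)"
    unfolding Avg_Suc[OF assms] M_def by (intro Avg_cong) (simp add: step_W assms)
  have "Avg k (\<lambda>p. (1 - 2 / M) * W p + (1 / M) * (W p + T p)) \<le> Avg k (\<lambda>p. W p + (\<Sum>i\<in>R p. g p i) / M)"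
  proof (rule Avg_mono)
    fix p assume p: "p \<in> Lk k"
    have "T p - W p \<le> (\<Sum>i\<in>R p. g p i)" by (rule B1[OF Lk_sub[OF p]])
    then have "(T p - W p) / M \<le> (\<Sum>i\<in>R p. g p i) / M" using M by (simp add: divide_right_mono)
    moreover have "(1 - 2 / M) * W p + (1 / M) * (W p + T p) = W p + (T p - W p) / M"
      using M by (simp add: field_simps)
    ultimately show "(1 - 2 / M) * W p + (1 / M) * (W p + T p) \<le> W p + (\<Sum>i\<in>R p. g p i) / M"
      by linarith
  qed
  then have "(1 - 2 / M) * w k + (1 / M) * v k \<le> w (Suc k)"
    unfolding Avg_lin w_def v_def ws .
  then show "w k + (v k - 2 * w k) / real (card N - k) \<le> w (Suc k)"
    using M unfolding M_def[symmetric] by (simp add: field_simps)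
  have "Avg k (\<lambda>p. 1 * W p + 0 * W p) \<le> Avg k (\<lambda>p. W p + (\<Sum>i\<in>R p. g p i) / M)"
  proof (rule Avg_mono)
    fix p assume p: "p \<in> Lk k"
    have "0 \<le> (\<Sum>i\<in>R p. g p i)" by (intro sum_nonneg g_ge(1))
    then show "1 * W p + 0 * W p \<le> W p + (\<Sum>i\<in>R p. g p i) / M" using M by simp
  qed
  then show "w k \<le> w (Suc k)" unfolding Avg_lin w_def ws by simp
qed

lemma rec_v:
  assumes "k < card N"
  shows "v k + (w k - v k) / real (card N - k) \<le> v (Suc k)"
proof -
  define M where "M = real (card N - k)"
  have M: "M > 0" using assms by (simp add: M_def)
  have vs: "Avg (Suc k) (\<lambda>p. W p + T p) = Avg k (\<lambda>p. W p + T p + ((\<Sum>i\<in>R p. g p i) + (\<Sum>i\<in>R p. T (p @ [i]) - T p)) / M)"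
    unfolding Avg_Suc[OF assms] M_def by (intro Avg_cong) (simp add: step_WT assms)
  have "Avg k (\<lambda>p. (1 - 1 / M) * (W p + T p) + (1 / M) * W p) \<le> Avg k (\<lambda>p. W p + T p + ((\<Sum>i\<in>R p. g p i) + (\<Sum>i\<in>R p. T (p @ [i]) - T p)) / M)"
  proof (rule Avg_mono)
    fix p assume p: "p \<in> Lk k"
    have "- T p \<le> (\<Sum>i\<in>R p. g p i) + (\<Sum>i\<in>R p. T (p @ [i]) - T p)" using B2[OF Lk_sub[OF p]] by linarith
    then have "(- T p) / M \<le> ((\<Sum>i\<in>R p. g p i) + (\<Sum>i\<in>R p. T (p @ [i]) - T p)) / M" using M by (intro divide_right_mono) auto
    moreover have "(1 - 1 / M) * (W p + T p) + (1 / M) * W p = W p + T p + (- T p) / M"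
      using M by (simp add: field_simps)
    ultimately show "(1 - 1 / M) * (W p + T p) + (1 / M) * W p \<le> W p + T p + ((\<Sum>i\<in>R p. g p i) + (\<Sum>i\<in>R p. T (p @ [i]) - T p)) / M"
      by linarith
  qed
  then have "(1 - 1 / M) * v k + (1 / M) * w k \<le> v (Suc k)"
    unfolding Avg_lin w_def v_def vs .
  then show ?thesis
    using M unfolding M_def[symmetric] by (simp add: field_simps)
qed

lemma w0: "w 0 = W []" and v0: "v 0 = W [] + welfare n f Opt"
proof -
  show "w 0 = W []" by (simp add: w_def Avg_def Lk0)
  have "T [] = welfare n f Opt"
    unfolding T_def welfare_def R_def using optN by (intro sum.cong) (auto simp: greedy_alloc_Nil Int_absorb2)
  then show "v 0 = W [] + welfare n f Opt" by (simp add: v_def Avg_def Lk0)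
qed

lemma wm: "w (card N) = expected_greedy N n f ch"
  by (simp add: w_def Avg_def expected_greedy_def Lk_perm W_def welfare_def)

lemma W0_nonneg: "0 \<le> W []" by (rule W_nonneg) simp

lemma opt_nonneg: "0 \<le> welfare n f Opt"
  unfolding welfare_def using nonneg optN by (auto intro!: sum_nonneg)

end

definition aa :: real where "aa = (3 - sqrt 5) / 2"
definition bb :: real where "bb = (3 + sqrt 5) / 2"

lemma s5_sq: "sqrt 5 * sqrt 5 = (5::real)" by simp
lemma s5_bounds: "2.236 \<le> sqrt (5::real)" "sqrt (5::real) \<le> 2.2361"
proof -
  show "2.236 \<le> sqrt (5::real)" by (rule real_le_rsqrt) (simp add: power2_eq_square)
  have "sqrt (5::real) \<le> sqrt (2.2361 ^ 2)" by (rule real_sqrt_le_mono) (simp add: power2_eq_square)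
  then show "sqrt (5::real) \<le> 2.2361" by simp
qed

lemma aa_bounds: "0.38195 \<le> aa" "aa \<le> 0.382" using s5_bounds by (auto simp: aa_def)
lemma bb_bounds: "2.618 \<le> bb" "bb \<le> 2.61805" using s5_bounds by (auto simp: bb_def)
lemma bb_minus_aa: "bb - aa = sqrt 5" by (simp add: aa_def bb_def field_simps)
lemma aa_times_bb: "aa * bb = 1"
  by (simp add: aa_def bb_def field_simps)

lemma rec_closed:
  fixes w v :: "nat \<Rightarrow> real" and m np :: nat
  assumes np: "2 \<le> np" "np < m"
    and rw: "\<And>k. k < m \<Longrightarrow> w k + (v k - 2 * w k) / real (m - k) \<le> w (Suc k)"
    and rv: "\<And>k. k < m \<Longrightarrow> v k + (w k - v k) / real (m - k) \<le> v (Suc k)"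
  shows "((\<Prod>r\<in>{np<..m}. 1 - aa / real r) * ((sqrt 5 - 1) / 2) + ((1 + sqrt 5) / 2) * (\<Prod>r\<in>{np<..m}. 1 - bb / real r)) / sqrt 5 * w 0
        + ((\<Prod>r\<in>{np<..m}. 1 - aa / real r) - (\<Prod>r\<in>{np<..m}. 1 - bb / real r)) / sqrt 5 * v 0 \<le> w (m - np)"
proof -
  define s :: real where "s = sqrt 5"
  define \<psi> where "\<psi> = (s - 1) / 2"
  define \<phi> where "\<phi> = (1 + s) / 2"
  define K where "K = m - np"
  define Pa where "Pa k = (\<Prod>r\<in>{np<..m-k}. 1 - aa / real r)" for k
  define Pb where "Pb k = (\<Prod>r\<in>{np<..m-k}. 1 - bb / real r)" for k
  define \<alpha> where "\<alpha> k = (Pa k * \<psi> + \<phi> * Pb k) / s" for k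
  define \<beta> where "\<beta> k = (Pa k - Pb k) / s" for k
  have s: "s * s = 5" "s > 0" by (simp_all add: s_def)
  have psi_eq: "\<psi> * (2 - aa) = 1" unfolding \<psi>_def aa_def s_def[symmetric]
    by (simp add: field_simps) (simp add: algebra_simps s)
  have phi_eq: "\<phi> * (bb - 2) = 1" unfolding \<phi>_def bb_def s_def[symmetric]
    by (simp add: field_simps) (simp add: algebra_simps s)
  have psi_pos: "\<psi> > 0" "\<phi> > 0" using s5_bounds by (auto simp: \<psi>_def \<phi>_def s_def)
  have fa_nn: "0 \<le> 1 - bb / real r" "1 - bb / real r \<le> 1 - aa / real r" if "np < r" for r
  proof -
    have "real r \<ge> 3" using that np by simp
    then show "0 \<le> 1 - bb / real r" using bb_bounds by (simp add: field_simps)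
    show "1 - bb / real r \<le> 1 - aa / real r" using \<open>real r \<ge> 3\<close> aa_bounds bb_bounds
      by (simp add: divide_right_mono)
  qed
  have Pb_nn: "0 \<le> Pb k" "Pb k \<le> Pa k" for k
    unfolding Pa_def Pb_def using fa_nn by (auto intro!: prod_nonneg prod_mono)
  have ab_nn: "0 \<le> \<alpha> k" "0 \<le> \<beta> k" for k
    using Pb_nn[of k] psi_pos s by (auto simp: \<alpha>_def \<beta>_def intro!: divide_nonneg_pos add_nonneg_nonneg mult_nonneg_nonneg)
  have Pstep: "Pa k = (1 - aa / real (m - k)) * Pa (Suc k)" "Pb k = (1 - bb / real (m - k)) * Pb (Suc k)"
    if "k < K" for k
  proof -
    have e: "{np<..m - k} = insert (m - k) {np<..m - Suc k}" using that by (auto simp: K_def)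
    have nin: "m - k \<notin> {np<..m - Suc k}" by auto
    show "Pa k = (1 - aa / real (m - k)) * Pa (Suc k)" "Pb k = (1 - bb / real (m - k)) * Pb (Suc k)"
      unfolding Pa_def Pb_def e using nin by simp_all
  qed
  have main: "\<alpha> (K - j) * w (K - j) + \<beta> (K - j) * v (K - j) \<le> w K" if "j \<le> K" for j
    using that
  proof (induction j)
    case 0
    have "Pa K = 1" "Pb K = 1" by (simp_all add: Pa_def Pb_def K_def)
    then have "\<alpha> K = 1" "\<beta> K = 0" using s by (simp_all add: \<alpha>_def \<beta>_def \<psi>_def \<phi>_def field_simps)
    then show ?case by simp
  next
    case (Suc j)
    define k where "k = K - Suc j"
    have kK: "k < K" "Suc k = K - j" using Suc.prems by (auto simp: k_def)
    have km: "k < m" using kK by (simp add: K_def)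
    define h where "h = 1 / real (m - k)"
    have h: "h \<ge> 0" by (simp add: h_def)
    have IH: "\<alpha> (Suc k) * w (Suc k) + \<beta> (Suc k) * v (Suc k) \<le> w K"
      using Suc.IH Suc.prems kK by simp
    have w1: "w k + h * (v k - 2 * w k) \<le> w (Suc k)" using rw[OF km] by (simp add: h_def)
    have v1: "v k + h * (w k - v k) \<le> v (Suc k)" using rv[OF km] by (simp add: h_def)
    have "\<alpha> (Suc k) * (w k + h * (v k - 2 * w k)) + \<beta> (Suc k) * (v k + h * (w k - v k))
          \<le> \<alpha> (Suc k) * w (Suc k) + \<beta> (Suc k) * v (Suc k)"
      by (intro add_mono mult_left_mono w1 v1 ab_nn)
    moreover have ak: "\<alpha> k = \<alpha> (Suc k) * (1 - 2 * h) + \<beta> (Suc k) * h"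
    proof -
      have "\<alpha> k * s = (1 - aa * h) * Pa (Suc k) * \<psi> + \<phi> * ((1 - bb * h) * Pb (Suc k))"
        using Pstep[OF kK(1)] s by (simp add: \<alpha>_def h_def)
      also have "\<dots> = (Pa (Suc k) * \<psi> + \<phi> * Pb (Suc k)) * (1 - 2 * h) + (Pa (Suc k) - Pb (Suc k)) * h
          + Pa (Suc k) * h * (\<psi> * (2 - aa) - 1) + Pb (Suc k) * h * (1 - \<phi> * (bb - 2))"
        by (simp add: algebra_simps)
      also have "\<psi> * (2 - aa) - 1 = 0" using psi_eq by simp
      also have "1 - \<phi> * (bb - 2) = 0" using phi_eq by simp
      also have "(Pa (Suc k) * \<psi> + \<phi> * Pb (Suc k)) * (1 - 2 * h) + (Pa (Suc k) - Pb (Suc k)) * h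
          + Pa (Suc k) * h * 0 + Pb (Suc k) * h * 0 = (\<alpha> (Suc k) * s) * (1 - 2 * h) + (\<beta> (Suc k) * s) * h"
        using s by (simp add: \<alpha>_def \<beta>_def)
      also have "\<dots> = (\<alpha> (Suc k) * (1 - 2 * h) + \<beta> (Suc k) * h) * s" by (simp add: algebra_simps)
      finally show ?thesis using s by simp
    qed
    moreover have bk: "\<beta> k = \<alpha> (Suc k) * h + \<beta> (Suc k) * (1 - h)"
    proof -
      have "\<beta> k * s = (1 - aa * h) * Pa (Suc k) - ((1 - bb * h) * Pb (Suc k))"
        using Pstep[OF kK(1)] s by (simp add: \<beta>_def h_def)
      also have "\<dots> = (Pa (Suc k) * \<psi> + \<phi> * Pb (Suc k)) * h + (Pa (Suc k) - Pb (Suc k)) * (1 - h)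
          + Pa (Suc k) * h * (1 - \<psi> - aa) + Pb (Suc k) * h * (bb - \<phi> - 1)"
        by (simp add: algebra_simps)
      also have "1 - \<psi> - aa = 0" by (simp add: \<psi>_def aa_def s_def field_simps)
      also have "bb - \<phi> - 1 = 0" by (simp add: \<phi>_def bb_def s_def field_simps)
      also have "(Pa (Suc k) * \<psi> + \<phi> * Pb (Suc k)) * h + (Pa (Suc k) - Pb (Suc k)) * (1 - h)
          + Pa (Suc k) * h * 0 + Pb (Suc k) * h * 0 = (\<alpha> (Suc k) * s) * h + (\<beta> (Suc k) * s) * (1 - h)"
        using s by (simp add: \<alpha>_def \<beta>_def)
      also have "\<dots> = (\<alpha> (Suc k) * h + \<beta> (Suc k) * (1 - h)) * s" by (simp add: algebra_simps)
      finally show ?thesis using s by simp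
    qed
    moreover have "\<alpha> k * w k + \<beta> k * v k = \<alpha> (Suc k) * (w k + h * (v k - 2 * w k)) + \<beta> (Suc k) * (v k + h * (w k - v k))"
      unfolding ak bk by (simp add: algebra_simps)
    ultimately have "\<alpha> k * w k + \<beta> k * v k \<le> \<alpha> (Suc k) * w (Suc k) + \<beta> (Suc k) * v (Suc k)"
      by linarith
    then show ?case using IH by (simp add: k_def)
  qed
  from main[of K] show ?thesis
    by (simp add: \<alpha>_def \<beta>_def Pa_def Pb_def \<psi>_def \<phi>_def s_def K_def)
qed

lemma ln_upper3:
  fixes y :: real assumes "0 \<le> y" "y < 1"
  shows "ln (1 - y) \<le> - (y + y^2/2 + y^3/3)"
proof -
  define F where "F t = - (t + t^2/2 + t^3/3) - ln (1 - t)" for t :: real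
  have "F 0 \<le> F y"
  proof (rule DERIV_nonneg_imp_nondecreasing[OF assms(1)])
    fix x assume x: "0 \<le> x" "x \<le> y"
    then have x1: "x < 1" using assms by simp
    have "(F has_real_derivative (- (1 + x + x^2) + 1 / (1 - x))) (at x)"
      unfolding F_def using x1
      by (auto intro!: derivative_eq_intros simp: field_simps power2_eq_square)
    moreover have "0 \<le> - (1 + x + x^2) + 1 / (1 - x)"
    proof -
      have "(1 - x) * (1 + x + x^2) \<le> 1" using x by (simp add: algebra_simps power2_eq_square power3_eq_cube)
      then have "1 + x + x^2 \<le> 1 / (1 - x)" using x1 by (simp add: field_simps)
      then show ?thesis by simp
    qed
    ultimately show "\<exists>d. (F has_real_derivative d) (at x) \<and> 0 \<le> d" by blast
  qed
  then show ?thesis by (simp add: F_def)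
qed

lemma ln_lower2u:
  fixes u :: real assumes "0 < u" "u \<le> 1"
  shows "(u - 1 / u) / 2 \<le> ln u"
proof -
  define F where "F t = ln t - (t - 1 / t) / 2" for t :: real
  have "F 1 \<le> F u"
  proof (rule DERIV_nonpos_imp_nonincreasing[OF assms(2)])
    fix z assume z: "u \<le> z" "z \<le> 1"
    then have z0: "z > 0" using assms by simp
    have "(F has_real_derivative (- ((z - 1)^2 / (2 * z^2)))) (at z)"
      unfolding F_def using z0
      by (auto intro!: derivative_eq_intros simp: field_simps power2_eq_square)
    moreover have "- ((z - 1)^2 / (2 * z^2)) \<le> 0" by simp
    ultimately show "\<exists>d. (F has_real_derivative d) (at z) \<and> d \<le> 0" by blast
  qed
  then show ?thesis by (simp add: F_def)
qed

lemma ln_lower2: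
  fixes x :: real assumes "0 \<le> x" "x < 1"
  shows "- (x + x^2 / (2 * (1 - x))) \<le> ln (1 - x)"
proof -
  have "((1 - x) - 1 / (1 - x)) / 2 \<le> ln (1 - x)" by (rule ln_lower2u) (use assms in auto)
  moreover have "((1 - x) - 1 / (1 - x)) / 2 = - (x + x^2 / (2 * (1 - x)))"
    using assms by (simp add: field_simps power2_eq_square)
  ultimately show ?thesis by simp
qed

lemma ln_lower3u:
  fixes u :: real assumes "0 < u" "u \<le> 1"
  shows "- ((1 - u) + (1 - u)^2 / 2 + (1 - u)^3 / (3 * u)) \<le> ln u"
proof -
  define F where "F t = ln t + ((1 - t) + (1 - t)^2 / 2 + (1 - t)^3 / (3 * t))" for t :: real
  have "F 1 \<le> F u"
  proof (rule DERIV_nonpos_imp_nonincreasing[OF assms(2)])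
    fix z assume z: "u \<le> z" "z \<le> 1"
    then have z0: "z > 0" using assms by simp
    have "(F has_real_derivative (- ((1 - z)^3 / (3 * z^2)))) (at z)"
      unfolding F_def using z0
      by (auto intro!: derivative_eq_intros simp: field_simps power2_eq_square power3_eq_cube)
    moreover have "- ((1 - z)^3 / (3 * z^2)) \<le> 0" using z by simp
    ultimately show "\<exists>d. (F has_real_derivative d) (at z) \<and> d \<le> 0" by blast
  qed
  then show ?thesis by (simp add: F_def)
qed

lemma ln_lower3:
  fixes y :: real assumes "0 \<le> y" "y < 1"
  shows "- (y + y^2/2 + y^3 / (3 * (1 - y))) \<le> ln (1 - y)"
  using ln_lower3u[of "1 - y"] assms by simp

lemma PA:
  fixes r :: real assumes r: "6 \<le> r"
  shows "1/r + (191/500)/(2*r*(r - 191/500)) \<le> 1/(r+1/4) + (1/(r+1/4))^2/2 + (1/(r+1/4))^3/3"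
proof -
  define t where "t = r - 6"
  define s where "s = r + 1/4"
  define q where "q = r - 191/500"
  have t: "0 \<le> t" using r by (auto simp: t_def)
  have pos: "r > 0" "s > 0" "q > 0" using r by (auto simp: s_def q_def)
  define d where "d = 1/s + (1/s)^2/2 + (1/s)^3/3 - (1/r + (191/500)/(2*r*q))"
  define D where "D = 12 * s^3 * (r * q)"
  have Dpos: "D > 0" using pos by (simp add: D_def)
  have eq1: "d * D = 12* s^2*r*q + 6* s*r*q + 4*r*q - 12* s^3*q - 6*(191/500)* s^3"
    using pos unfolding d_def D_def by (simp add: field_simps power2_eq_square power3_eq_cube)
  have eq2: "12* s^2*r*q + 6* s*r*q + 4*r*q - 12* s^3*q - 6*(191/500)* s^3
     = 2895237/16000 + 70351/800 * t + 13879/1000 * t^2 + 177/250 * t^3"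
    unfolding s_def q_def t_def by (simp add: field_simps power2_eq_square power3_eq_cube)
  have "0 \<le> 2895237/16000 + 70351/800 * t + 13879/1000 * t^2 + 177/250 * t^3"
    using t by (intro add_nonneg_nonneg mult_nonneg_nonneg) auto
  then have "0 \<le> d * D" using eq1 eq2 by simp
  then have "0 \<le> d" using Dpos by (simp add: zero_le_mult_iff)
  then show ?thesis by (simp add: d_def s_def q_def)
qed

lemma PB:
  fixes r :: real assumes r: "6 \<le> r"
  shows "1/(r-3/4) + (1/(r-3/4))^2/2 + (1/(r-3/4))^3/(3*(1 - 1/(r-3/4)))
         \<le> 1/r + (1309/500)/(2*r^2) + (1309/500)^2/(3*r^3)"
proof -
  define t where "t = r - 6"
  define u where "u = r - 3/4"
  define z where "z = r - 7/4"
  have t: "0 \<le> t" using r by (auto simp: t_def)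
  have pos: "r > 0" "u > 0" "z > 0" using r by (auto simp: u_def z_def)
  have e1: "1 - 1/u = z/u" using pos by (simp add: field_simps u_def z_def)
  define d where "d = 1/r + (1309/500)/(2*r^2) + (1309/500)^2/(3*r^3) - (1/u + (1/u)^2/2 + 1/(3 * u^2 * z))"
  define D where "D = 6 * r^3 * u^2 * z"
  have Dpos: "D > 0" using pos by (simp add: D_def)
  have eq1: "d * D = 6*r^2*u^2*z + 3*(1309/500)*r*u^2*z + 2*(1309/500)^2*u^2*z - 6*r^3*u*z - 3*r^3*z - 2*r^3"
    using pos unfolding d_def D_def by (simp add: field_simps power2_eq_square power3_eq_cube)
  have eq2: "6*r^2*u^2*z + 3*(1309/500)*r*u^2*z + 2*(1309/500)^2*u^2*z - 6*r^3*u*z - 3*r^3*z - 2*r^3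
     = 2602045557/8000000 + 261157197/800000 * t + 99324133/1000000 * t^2 + 2794587/250000 * t^3 + 177/500 * t^4"
    unfolding u_def z_def t_def by (simp add: field_simps power2_eq_square power3_eq_cube power4_eq_xxxx)
  have "0 \<le> 2602045557/8000000 + 261157197/800000 * t + 99324133/1000000 * t^2 + 2794587/250000 * t^3 + 177/500 * t^4"
    using t by (intro add_nonneg_nonneg mult_nonneg_nonneg) auto
  then have "0 \<le> d * D" using eq1 eq2 by simp
  then have "0 \<le> d" using Dpos by (simp add: zero_le_mult_iff)
  moreover have "(1/u)^3/(3*(1 - 1/u)) = 1/(3 * u^2 * z)"
    unfolding e1 using pos by (simp add: field_simps power2_eq_square power3_eq_cube)
  ultimately show ?thesis by (simp add: d_def u_def)
qed

lemma Fa: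
  fixes r :: real assumes r: "6 \<le> r"
  shows "((r - 3/4) / (r + 1/4)) powr aa \<le> 1 - aa / r"
proof -
  define y where "y = 1 / (r + 1/4)"
  define x where "x = aa / r"
  have a: "0.38195 \<le> aa" "aa \<le> 0.382" by (rule aa_bounds)+
  have y: "0 \<le> y" "y < 1" using r by (auto simp: y_def)
  have x: "0 \<le> x" "x < 1" using r a by (auto simp: x_def)
  have base: "(r - 3/4) / (r + 1/4) = 1 - y" using r by (simp add: y_def field_simps)
  have "((r - 3/4) / (r + 1/4)) powr aa = exp (aa * ln (1 - y))"
    using y r by (simp add: base powr_def)
  also have "\<dots> \<le> exp (- aa * (y + y^2/2 + y^3/3))"
  proof -
    have "aa * ln (1 - y) \<le> aa * (- (y + y^2/2 + y^3/3))"
      by (rule mult_left_mono[OF ln_upper3[OF y]]) (use a in simp)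
    then show ?thesis by (simp add: algebra_simps)
  qed
  also have "\<dots> \<le> exp (- (x + x^2 / (2 * (1 - x))))"
  proof -
    have xe: "x + x^2 / (2 * (1 - x)) = aa * (1/r + aa/(2*r*(r - aa)))"
      using r a by (simp add: x_def field_simps power2_eq_square)
    have "aa/(2*r*(r - aa)) \<le> (191/500)/(2*r*(r - 191/500))"
    proof -
      have "aa * (2*r*(r - 191/500)) \<le> (191/500) * (2*r*(r - aa))"
        using r a by (simp add: algebra_simps)
      then show ?thesis using r a by (simp add: field_simps)
    qed
    then have "1/r + aa/(2*r*(r - aa)) \<le> y + y^2/2 + y^3/3"
      using PA[OF r] unfolding y_def by linarith
    then have "aa * (1/r + aa/(2*r*(r - aa))) \<le> aa * (y + y^2/2 + y^3/3)"
      using a by (simp add: mult_left_mono)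
    then show ?thesis using xe by simp
  qed
  also have "\<dots> \<le> exp (ln (1 - x))" using ln_lower2[OF x] by simp
  also have "\<dots> = 1 - aa / r" using x by (simp add: x_def)
  finally show ?thesis .
qed

lemma Fb:
  fixes r :: real assumes r: "6 \<le> r"
  shows "1 - bb / r \<le> ((r - 7/4) / (r - 3/4)) powr bb"
proof -
  define y where "y = 1 / (r - 3/4)"
  define x where "x = bb / r"
  have b: "2.618 \<le> bb" "bb \<le> 2.61805" by (rule bb_bounds)+
  have y: "0 \<le> y" "y < 1" using r by (auto simp: y_def)
  have x: "0 \<le> x" "x < 1" using r b by (auto simp: x_def)
  have base: "(r - 7/4) / (r - 3/4) = 1 - y" using r by (simp add: y_def field_simps)
  have "1 - bb / r = exp (ln (1 - x))" using x by (simp add: x_def)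
  also have "\<dots> \<le> exp (- (x + x^2/2 + x^3/3))" using ln_upper3[OF x] by simp
  also have "\<dots> \<le> exp (- bb * (y + y^2/2 + y^3 / (3 * (1 - y))))"
  proof -
    have xe: "x + x^2/2 + x^3/3 = bb * (1/r + bb/(2*r^2) + bb^2/(3*r^3))"
      using r by (simp add: x_def field_simps power2_eq_square power3_eq_cube)
    have "1/r + (1309/500)/(2*r^2) + (1309/500)^2/(3*r^3) \<le> 1/r + bb/(2*r^2) + bb^2/(3*r^3)"
    proof -
      have "(1309/500)/(2*r^2) \<le> bb/(2*r^2)" using b r by (intro divide_right_mono) auto
      moreover have "(1309/500::real)^2 \<le> bb^2" using b by (intro power_mono) auto
      then have "(1309/500)^2/(3*r^3) \<le> bb^2/(3*r^3)" using r by (intro divide_right_mono) auto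
      ultimately show ?thesis by linarith
    qed
    then have "y + y^2/2 + y^3 / (3 * (1 - y)) \<le> 1/r + bb/(2*r^2) + bb^2/(3*r^3)"
      using PB[OF r] unfolding y_def by linarith
    then have "bb * (y + y^2/2 + y^3 / (3 * (1 - y))) \<le> bb * (1/r + bb/(2*r^2) + bb^2/(3*r^3))"
      using b by (simp add: mult_left_mono)
    then show ?thesis using xe by simp
  qed
  also have "\<dots> \<le> exp (bb * ln (1 - y))"
  proof -
    have "bb * (- (y + y^2/2 + y^3 / (3 * (1 - y)))) \<le> bb * ln (1 - y)"
      by (rule mult_left_mono[OF ln_lower3[OF y]]) (use b in simp)
    then show ?thesis by (simp add: algebra_simps)
  qed
  also have "\<dots> = ((r - 7/4) / (r - 3/4)) powr bb"
    using y r by (simp add: base powr_def)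
  finally show ?thesis .
qed

lemma telescope:
  fixes c e :: real and np d :: nat
  assumes "real np + 1 + c > 0"
  shows "(\<Prod>r\<in>{np<..np + d}. ((real r + c) / (real r + c + 1)) powr e)
         = ((real np + 1 + c) / (real (np + d) + 1 + c)) powr e"
proof (induction d)
  case 0
  then show ?case using assms by simp
next
  case (Suc d)
  have e: "{np<..np + Suc d} = insert (np + Suc d) {np<..np + d}" by auto
  have nin: "np + Suc d \<notin> {np<..np + d}" by auto
  have p1: "real (np + d) + 1 + c > 0" using assms by simp
  have "(\<Prod>r\<in>{np<..np + Suc d}. ((real r + c) / (real r + c + 1)) powr e)
      = ((real (np + Suc d) + c) / (real (np + Suc d) + c + 1)) powr e
        * ((real np + 1 + c) / (real (np + d) + 1 + c)) powr e"
    unfolding e using nin Suc.IH by simp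
  also have "\<dots> = (((real (np + Suc d) + c) / (real (np + Suc d) + c + 1))
        * ((real np + 1 + c) / (real (np + d) + 1 + c))) powr e"
    by (rule powr_mult[symmetric]; use assms p1 in simp)
  also have "((real (np + Suc d) + c) / (real (np + Suc d) + c + 1))
        * ((real np + 1 + c) / (real (np + d) + 1 + c)) = (real np + 1 + c) / (real (np + Suc d) + 1 + c)"
  proof -
    define X where "X = real (np + d) + 1 + c"
    have X: "X > 0" using p1 by (simp add: X_def)
    have e1: "real (np + Suc d) + c = X" "real (np + Suc d) + c + 1 = X + 1" "real (np + Suc d) + 1 + c = X + 1"
      by (simp_all add: X_def)
    have X1: "X + 1 \<noteq> 0" "X \<noteq> 0" using X by auto
    show ?thesis unfolding e1 X_def[symmetric] using X1 by (simp add: divide_simps)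
  qed
  finally show ?case .
qed

lemma Pa_lower:
  fixes np m :: nat assumes "5 \<le> np" "np \<le> m"
  shows "((real np + 1/4) / (real m + 1/4)) powr aa \<le> (\<Prod>r\<in>{np<..m}. 1 - aa / real r)"
proof -
  obtain d where m: "m = np + d" using assms le_Suc_ex by blast
  have "((real np + 1/4) / (real m + 1/4)) powr aa
      = (\<Prod>r\<in>{np<..m}. ((real r + (-3/4)) / (real r + (-3/4) + 1)) powr aa)"
    using telescope[of np "-3/4" aa d] m by (simp add: add.commute add.left_commute)
  also have "\<dots> \<le> (\<Prod>r\<in>{np<..m}. 1 - aa / real r)"
  proof (rule prod_mono)
    fix r assume "r \<in> {np<..m}"
    then have r: "6 \<le> real r" using assms by simp
    have "((real r + (-3/4)) / (real r + (-3/4) + 1)) powr aa = ((real r - 3/4) / (real r + 1/4)) powr aa"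
      by (simp add: algebra_simps)
    then show "0 \<le> ((real r + (-3/4)) / (real r + (-3/4) + 1)) powr aa \<and>
          ((real r + (-3/4)) / (real r + (-3/4) + 1)) powr aa \<le> 1 - aa / real r"
      using Fa[OF r] by simp
  qed
  finally show ?thesis .
qed

lemma Pb_upper:
  fixes np m :: nat assumes "5 \<le> np" "np \<le> m"
  shows "(\<Prod>r\<in>{np<..m}. 1 - bb / real r) \<le> ((real np - 3/4) / (real m - 3/4)) powr bb"
proof -
  obtain d where m: "m = np + d" using assms le_Suc_ex by blast
  have "(\<Prod>r\<in>{np<..m}. 1 - bb / real r) \<le> (\<Prod>r\<in>{np<..m}. ((real r + (-7/4)) / (real r + (-7/4) + 1)) powr bb)"
  proof (rule prod_mono)
    fix r assume "r \<in> {np<..m}"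
    then have r: "6 \<le> real r" using assms by simp
    have "((real r + (-7/4)) / (real r + (-7/4) + 1)) powr bb = ((real r - 7/4) / (real r - 3/4)) powr bb"
      by (simp add: algebra_simps)
    moreover have "0 \<le> 1 - bb / real r" using r bb_bounds by (simp add: field_simps)
    ultimately show "0 \<le> 1 - bb / real r \<and> 1 - bb / real r \<le> ((real r + (-7/4)) / (real r + (-7/4) + 1)) powr bb"
      using Fb[OF r] by simp
  qed
  also have "\<dots> = ((real np - 3/4) / (real m - 3/4)) powr bb"
    using telescope[of np "-7/4" bb d] m assms by simp
  finally show ?thesis .
qed

lemma young_conc:
  fixes t e :: real assumes "0 < t" "0 \<le> e" "e \<le> 1"
  shows "t powr e \<le> 1 + e * (t - 1)"
  using Youngs_inequality_0[of e "1 - e" t 1] assms by (simp add: algebra_simps)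

lemma young_conv:
  fixes t e :: real assumes "0 < t" "1 \<le> e"
  shows "1 + e * (t - 1) \<le> t powr e"
proof -
  have "(t powr e) powr (1/e) * 1 powr (1 - 1/e) \<le> 1/e * t powr e + (1 - 1/e) * 1"
    using assms by (intro Youngs_inequality_0) (auto simp: field_simps)
  moreover have "(t powr e) powr (1/e) = t" using assms by (simp add: powr_powr)
  ultimately have "t \<le> t powr e / e + (1 - 1/e)" by simp
  then have "e * t \<le> e * (t powr e / e + (1 - 1/e))" using assms by (intro mult_left_mono) auto
  also have "e * (t powr e / e + (1 - 1/e)) = t powr e + (e - 1)" using assms by (simp add: field_simps)
  finally have "e * t \<le> t powr e + (e - 1)" .
  then show ?thesis by (simp add: algebra_simps)
qed

lemma key_iii:
  fixes R ra rb :: real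
  assumes rb: "0 < rb" "rb < ra" "rb \<le> R" and R0: "0 < R"
    and Rs: "R powr (sqrt 5) = aa / bb"
    and hi: "ra < R \<Longrightarrow> (R / rb) powr (sqrt 5) * (R - ra) \<le> R - rb"
  shows "R powr aa - R powr bb \<le> ra powr aa - rb powr bb"
proof -
  have a: "0.38195 \<le> aa" "aa \<le> 0.382" by (rule aa_bounds)+
  have b: "2.618 \<le> bb" "bb \<le> 2.61805" by (rule bb_bounds)+
  have ra0: "0 < ra" using rb by simp
  have conc: "R powr aa \<le> ra powr aa * (1 + aa * (R / ra - 1))"
  proof -
    have "(R / ra) powr aa \<le> 1 + aa * (R / ra - 1)" using R0 ra0 a by (intro young_conc) auto
    then have "R powr aa / ra powr aa \<le> 1 + aa * (R / ra - 1)" using R0 ra0 by (simp add: powr_divide)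
    then show ?thesis using ra0 by (simp add: field_simps)
  qed
  have conv: "rb powr bb * (1 + bb * (R / rb - 1)) \<le> R powr bb"
  proof -
    have "1 + bb * (R / rb - 1) \<le> (R / rb) powr bb" using R0 rb b by (intro young_conv) auto
    then have "1 + bb * (R / rb - 1) \<le> R powr bb / rb powr bb" using R0 rb by (simp add: powr_divide)
    then show ?thesis using rb by (simp add: field_simps)
  qed
  have need: "ra powr aa * (aa * (R / ra - 1)) \<le> rb powr bb * (bb * (R / rb - 1))"
  proof (cases "R \<le> ra")
    case True
    have "ra powr aa * (aa * (R / ra - 1)) \<le> 0"
      using True ra0 a by (intro mult_nonneg_nonpos) (auto simp: field_simps)
    moreover have "0 \<le> rb powr bb * (bb * (R / rb - 1))"
      using rb b by (intro mult_nonneg_nonneg) (auto simp: field_simps)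
    ultimately show ?thesis by linarith
  next
    case False
    then have Rra: "ra < R" by simp
    have s5: "sqrt 5 > (0::real)" by simp
    have "ra powr aa / ra \<le> rb powr aa / rb"
    proof -
      have q1: "1 \<le> ra / rb" using rb by simp
      have "(ra / rb) powr aa \<le> (ra / rb) powr 1" using q1 a by (intro powr_mono) auto
      then have "ra powr aa / rb powr aa \<le> ra / rb" using rb ra0 by (simp add: powr_divide)
      then show ?thesis using rb ra0 by (simp add: field_simps)
    qed
    then have L: "ra powr aa * (aa * (R / ra - 1)) \<le> aa * (rb powr aa / rb) * (R - ra)"
    proof -
      have "ra powr aa * (aa * (R / ra - 1)) = aa * (ra powr aa / ra) * (R - ra)"
        using ra0 by (simp add: field_simps)
      also have "\<dots> \<le> aa * (rb powr aa / rb) * (R - ra)"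
        using \<open>ra powr aa / ra \<le> rb powr aa / rb\<close> a Rra by (intro mult_right_mono mult_left_mono) auto
      finally show ?thesis .
    qed
    have bbs: "bb = aa + sqrt 5" using bb_minus_aa by simp
    have rbs: "rb powr (sqrt 5) = (aa / bb) * (rb / R) powr (sqrt 5)"
      using Rs R0 rb a b by (simp add: powr_divide)
    have Rt: "rb powr bb * (bb * (R / rb - 1)) = aa * (rb powr aa / rb) * ((rb / R) powr (sqrt 5) * (R - rb))"
    proof -
      have "rb powr bb = rb powr aa * rb powr (sqrt 5)" unfolding bbs by (simp add: powr_add)
      then have "rb powr bb * (bb * (R / rb - 1)) = rb powr aa * ((aa / bb) * (rb / R) powr (sqrt 5)) * (bb * (R / rb - 1))"
        using rbs by simp
      also have "\<dots> = aa * (rb powr aa / rb) * ((rb / R) powr (sqrt 5) * (R - rb))"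
        using rb b by (simp add: field_simps)
      finally show ?thesis .
    qed
    have "R - ra \<le> (rb / R) powr (sqrt 5) * (R - rb)"
    proof -
      have h: "(R / rb) powr (sqrt 5) * (R - ra) \<le> R - rb" by (rule hi[OF Rra])
      have "(rb / R) powr (sqrt 5) * (R / rb) powr (sqrt 5) = 1"
        using R0 rb by (simp add: powr_mult[symmetric])
      moreover have "0 < (rb / R) powr (sqrt 5)" using R0 rb by simp
      ultimately have "(rb / R) powr (sqrt 5) * ((R / rb) powr (sqrt 5) * (R - ra)) \<le> (rb / R) powr (sqrt 5) * (R - rb)"
        using h by (intro mult_left_mono) auto
      then show ?thesis using \<open>(rb / R) powr (sqrt 5) * (R / rb) powr (sqrt 5) = 1\<close>
        by (simp add: mult.assoc[symmetric])
    qed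
    then have "aa * (rb powr aa / rb) * (R - ra) \<le> aa * (rb powr aa / rb) * ((rb / R) powr (sqrt 5) * (R - rb))"
      using a rb by (intro mult_left_mono) auto
    then show ?thesis using L Rt by linarith
  qed
  show ?thesis using conc conv need by (simp add: algebra_simps)
qed

definition xs :: real where "xs = ln (bb / aa) / sqrt 5"
definition R0 :: real where "R0 = exp (- xs)"

lemma aa_pos: "0 < aa" and bb_pos: "0 < bb" using aa_bounds bb_bounds by auto

lemma ratio_eq: "greedy_ratio = (R0 powr aa - R0 powr bb) / sqrt 5"
  by (simp add: greedy_ratio_def Let_def aa_def[symmetric] bb_def[symmetric] xs_def R0_def powr_def)

lemma R0_pos: "0 < R0" by (simp add: R0_def)

lemma R0_s: "R0 powr (sqrt 5) = aa / bb"
proof -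
  have "R0 powr (sqrt 5) = exp (- (sqrt 5 * xs))" by (simp add: R0_def powr_def)
  also have "sqrt 5 * xs = ln (bb / aa)" by (simp add: xs_def)
  also have "exp (- ln (bb / aa)) = aa / bb" using aa_pos bb_pos by (simp add: exp_minus)
  finally show ?thesis .
qed

lemma aa_over_bb: "aa / bb = aa * aa"
  using aa_times_bb bb_pos by (simp add: field_simps)

lemma powr_frac_pow:
  fixes x :: real assumes "0 < x" "0 < q"
  shows "(x powr (real p / real q)) ^ q = x ^ p"
proof -
  have "(x powr (real p / real q)) ^ q = x powr (real q * (real p / real q))"
    using assms by (simp add: powr_power)
  also have "real q * (real p / real q) = real p" using assms by simp
  finally show ?thesis using assms by (simp add: powr_realpow)
qed

lemma R0_upper: "R0 \<le> 0.44"
proof (rule ccontr)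
  assume "\<not> R0 \<le> 0.44"
  then have R: "0.44 < R0" by simp
  have s: "2.236 \<le> sqrt (5::real)" "sqrt (5::real) \<le> 2.2361" by (rule s5_bounds)+
  have "(0.44::real) powr (9/4) \<le> 0.44 powr (sqrt 5)" using s by (intro powr_mono') auto
  also have "\<dots> \<le> R0 powr (sqrt 5)" using R s by (intro powr_mono2) auto
  also have "\<dots> = aa * aa" using R0_s aa_over_bb by simp
  also have "\<dots> \<le> 0.382 * 0.382" using aa_bounds aa_pos by (intro mult_mono) auto
  finally have h: "(0.44::real) powr (9/4) \<le> 0.382 * 0.382" .
  have "((0.44::real) powr (real 9 / real 4)) ^ 4 = 0.44 ^ 9" by (rule powr_frac_pow) auto
  moreover have "((0.44::real) powr (real 9 / real 4)) ^ 4 \<le> (0.382 * 0.382) ^ 4"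
    using h by (intro power_mono) auto
  ultimately have "(0.44::real) ^ 9 \<le> (0.382 * 0.382) ^ 4" by simp
  then show False by (simp add: power_divide)
qed

lemma R0_lower: "0.4 \<le> R0"
proof (rule ccontr)
  assume "\<not> 0.4 \<le> R0"
  then have R: "R0 < 0.4" by simp
  have s: "2.236 \<le> sqrt (5::real)" "sqrt (5::real) \<le> 2.2361" by (rule s5_bounds)+
  have "0.38195 * 0.38195 \<le> aa * aa" using aa_bounds by (intro mult_mono) auto
  also have "aa * aa = R0 powr (sqrt 5)" using R0_s aa_over_bb by simp
  also have "\<dots> \<le> 0.4 powr (sqrt 5)" using R R0_pos s by (intro powr_mono2) auto
  also have "\<dots> \<le> 0.4 powr (11/5)" using s by (intro powr_mono') auto
  finally have h: "0.38195 * 0.38195 \<le> (0.4::real) powr (11/5)" .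
  have "((0.4::real) powr (real 11 / real 5)) ^ 5 = 0.4 ^ 11" by (rule powr_frac_pow) auto
  moreover have "(0.38195 * 0.38195) ^ 5 \<le> ((0.4::real) powr (real 11 / real 5)) ^ 5"
    using h by (intro power_mono) auto
  ultimately have "(0.38195 * 0.38195::real) ^ 5 \<le> 0.4 ^ 11" by simp
  then show False by (simp add: power_divide)
qed

lemma ratio_le: "greedy_ratio \<le> 0.29"
proof -
  have s: "2.236 \<le> sqrt (5::real)" "sqrt (5::real) \<le> 2.2361" by (rule s5_bounds)+
  have bbs: "bb = aa + sqrt 5" using bb_minus_aa by simp
  have "R0 powr bb = R0 powr aa * (aa / bb)" unfolding bbs by (simp add: powr_add R0_s[unfolded bbs])
  then have "greedy_ratio = R0 powr aa * ((1 - aa / bb) / sqrt 5)"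
    by (simp add: ratio_eq algebra_simps)
  also have "(1 - aa / bb) / sqrt 5 = aa"
  proof -
    have "1 - aa / bb = (bb - aa) / bb" using bb_pos by (simp add: field_simps)
    also have "\<dots> = (bb - aa) * aa" using aa_times_bb bb_pos by (simp add: field_simps)
    finally show ?thesis using bb_minus_aa by simp
  qed
  finally have gr: "greedy_ratio = R0 powr aa * aa" .
  have "R0 powr aa \<le> 0.44 powr aa" using R0_upper R0_pos aa_pos by (intro powr_mono2) auto
  also have "\<dots> \<le> 0.44 powr (19/50)" using aa_bounds by (intro powr_mono') auto
  also have "\<dots> \<le> 0.74"
  proof (rule ccontr)
    assume "\<not> (0.44::real) powr (19/50) \<le> 0.74"
    then have h: "0.74 < (0.44::real) powr (19/50)" by simp
    have "((0.44::real) powr (real 19 / real 50)) ^ 50 = 0.44 ^ 19" by (rule powr_frac_pow) auto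
    moreover have "(0.74::real) ^ 50 < ((0.44::real) powr (real 19 / real 50)) ^ 50"
      using h by (intro power_strict_mono) auto
    ultimately have "(0.74::real) ^ 50 < 0.44 ^ 19" by simp
    then show False by (simp add: power_divide)
  qed
  finally have "R0 powr aa \<le> 0.74" .
  then have "R0 powr aa * aa \<le> 0.74 * 0.382" using aa_bounds aa_pos by (intro mult_mono) auto
  then show ?thesis using gr by simp
qed

lemma t1: fixes x y :: real assumes "5 \<le> x" "x < y"
  shows "(x - 3/4) / (y - 3/4) < (x + 1/4) / (y + 1/4)"
proof -
  have e: "(16 * x + 4) * (16 * y - 12) - (16 * x - 12) * (16 * y + 4) = 256 * (y - x)" by (simp add: algebra_simps)
  have "(16 * x - 12) * (16 * y + 4) < (16 * x + 4) * (16 * y - 12)" using assms by (simp add: algebra_simps)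
  then show ?thesis using assms by (simp add: divide_simps)
qed
lemma t3: fixes x y E R :: real assumes "5 \<le> x" "12 \<le> y" "R = (x - 3/4 + E) / (y - 3/4)"
  shows "R - (x - 3/4) / (y - 3/4) = E / (y - 3/4)"
proof -
  have "R - (x - 3/4) / (y - 3/4) = ((x - 3/4 + E) - (x - 3/4)) / (y - 3/4)"
    unfolding assms(3) by (rule diff_divide_distrib[symmetric])
  then show ?thesis by simp
qed
lemma t4: fixes r :: real assumes "3 \<le> r" "0.38195 \<le> aa" "aa \<le> 0.382"
  shows "0 \<le> 1 - 0.382 / r \<and> 1 - 0.382 / r \<le> 1 - aa / r"
proof
  show "0 \<le> 1 - 0.382 / r" using assms by (simp add: divide_simps)
  have "aa / r \<le> 0.382 / r" by (rule divide_right_mono) (use assms in auto)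
  then show "1 - 0.382 / r \<le> 1 - aa / r" by linarith
qed
lemma t5: fixes r :: real assumes "3 \<le> r" "2.618 \<le> bb" "bb \<le> 2.61805"
  shows "0 \<le> 1 - bb / r \<and> 1 - bb / r \<le> 1 - 2.618 / r"
proof
  show "0 \<le> 1 - bb / r" using assms by (simp add: divide_simps)
  have "2.618 / r \<le> bb / r" by (rule divide_right_mono) (use assms in auto)
  then show "1 - bb / r \<le> 1 - 2.618 / r" by linarith
qed

lemma general_case:
  fixes m :: nat assumes m12: "12 \<le> m"
  shows "\<exists>np. 2 \<le> np \<and> np < m \<and>
     sqrt 5 * greedy_ratio \<le> (\<Prod>r\<in>{np<..m}. 1 - aa / real r) - (\<Prod>r\<in>{np<..m}. 1 - bb / real r)"
proof -
  have R: "0.4 \<le> R0" "R0 \<le> 0.44" by (rule R0_lower, rule R0_upper)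
  have mr: "12 \<le> real m" using m12 by simp
  define z where "z = R0 * (real m - 3/4) + 3/4"
  define np where "np = nat \<lfloor>z\<rfloor>"
  have z5: "5 \<le> z"
  proof -
    have "0.4 * (real m - 3/4) \<le> R0 * (real m - 3/4)" using R mr by (intro mult_right_mono) auto
    then show ?thesis using mr by (simp add: z_def)
  qed
  have fl: "real_of_int \<lfloor>z\<rfloor> \<le> z" "z < real_of_int \<lfloor>z\<rfloor> + 1" by linarith+
  have fl0: "0 \<le> \<lfloor>z\<rfloor>" using z5 by linarith
  have npz: "real np = real_of_int \<lfloor>z\<rfloor>" using fl0 by (simp add: np_def)
  have np1: "real np \<le> z" "z < real np + 1" using fl npz by simp_all
  have np5: "5 \<le> np" using z5 np1 by linarith
  have npm: "np < m"
  proof -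
    have "R0 * (real m - 3/4) \<le> 0.44 * (real m - 3/4)" using R mr by (intro mult_right_mono) auto
    then have "z < real m" using mr by (simp add: z_def)
    then show ?thesis using np1 by linarith
  qed
  have npr: "5 \<le> real np" "real np < real m" using np5 npm by simp_all
  define ra where "ra = (real np + 1/4) / (real m + 1/4)"
  define rb where "rb = (real np - 3/4) / (real m - 3/4)"
  have PA: "ra powr aa \<le> (\<Prod>r\<in>{np<..m}. 1 - aa / real r)"
    unfolding ra_def by (rule Pa_lower) (use np5 npm in auto)
  have PB: "(\<Prod>r\<in>{np<..m}. 1 - bb / real r) \<le> rb powr bb"
    unfolding rb_def by (rule Pb_upper) (use np5 npm in auto)
  have rb0: "0 < rb" using npr mr by (simp add: rb_def)
  have rbra: "rb < ra"
    unfolding ra_def rb_def by (rule t1) (use npr in auto)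
  define E where "E = z - real np"
  have E: "0 \<le> E" "E < 1" using np1 by (auto simp: E_def)
  have R0eq: "R0 = (real np - 3/4 + E) / (real m - 3/4)"
    using mr by (simp add: E_def z_def field_simps)
  have rbR: "rb \<le> R0" unfolding R0eq rb_def using E mr by (intro divide_right_mono) auto
  have hi: "(R0 / rb) powr (sqrt 5) * (R0 - ra) \<le> R0 - rb" if hra: "ra < R0"
  proof -
    define k :: real where "k = 9261/4913"
    have s: "2.236 \<le> sqrt (5::real)" "sqrt (5::real) \<le> 2.2361" by (rule s5_bounds)+
    have q: "R0 / rb = 1 + E / (real np - 3/4)"
    proof -
      have "R0 / rb = (real np - 3/4 + E) / (real np - 3/4)" unfolding R0eq rb_def using npr mr by simp
      also have "\<dots> = 1 + E / (real np - 3/4)" using npr by (simp add: add_divide_distrib)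
      finally show ?thesis .
    qed
    have q1: "1 \<le> R0 / rb" unfolding q using E npr by simp
    have q2: "R0 / rb \<le> 21/17"
    proof -
      have "E / (real np - 3/4) \<le> 1 / (real np - 3/4)" using E npr by (intro divide_right_mono) auto
      also have "\<dots> \<le> 1 / (5 - 3/4)" using npr by (intro divide_left_mono) auto
      finally show ?thesis unfolding q by simp
    qed
    have "(R0 / rb) powr (sqrt 5) \<le> (R0 / rb) powr (3::real)" using q1 s by (intro powr_mono) auto
    also have "\<dots> = (R0 / rb) ^ 3" using q1 by (subst powr_numeral) auto
    also have "\<dots> \<le> (21/17)^3" using q1 q2 by (intro power_mono) auto
    also have "\<dots> = k" by (simp add: k_def power_divide)
    finally have pk: "(R0 / rb) powr (sqrt 5) \<le> k" .
    have Rra: "R0 - ra = (E + R0 - 1) / (real m + 1/4)"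
    proof -
      have h: "R0 * (real m + 1/4) = real np - 3/4 + E + R0"
        using mr by (simp add: E_def z_def algebra_simps)
      have "R0 - ra = (R0 * (real m + 1/4) - (real np + 1/4)) / (real m + 1/4)"
        unfolding ra_def using mr by (simp add: field_simps)
      also have "R0 * (real m + 1/4) - (real np + 1/4) = E + R0 - 1" using h by simp
      finally show ?thesis .
    qed
    have pos: "0 < E + R0 - 1"
    proof -
      have "0 < R0 - ra" using hra by simp
      then have "0 < (E + R0 - 1) / (real m + 1/4)" using Rra by simp
      then show ?thesis using mr by (simp add: zero_less_divide_iff)
    qed
    have Rrb: "R0 - rb = E / (real m - 3/4)"
      unfolding rb_def by (rule t3[OF _ _ R0eq]) (use npr mr in auto)
    have "(R0 / rb) powr (sqrt 5) * (R0 - ra) \<le> k * (R0 - ra)"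
      using pk hra by (intro mult_right_mono) auto
    also have "\<dots> = k * (E + R0 - 1) / (real m + 1/4)" unfolding Rra by simp
    also have "\<dots> \<le> k * (E + R0 - 1) / (real m - 3/4)"
      using pos mr by (intro divide_left_mono) (auto simp: k_def)
    also have "\<dots> \<le> E / (real m - 3/4)"
    proof (rule divide_right_mono)
      have "(k - 1) * E \<le> (k - 1) * 1" using E by (intro mult_left_mono) (auto simp: k_def)
      moreover have "(k - 1) * 1 \<le> k * (1 - R0)" using R by (simp add: k_def)
      ultimately show "k * (E + R0 - 1) \<le> E" by (simp add: algebra_simps)
    qed (use mr in simp)
    finally show ?thesis using Rrb by simp
  qed
  have "R0 powr aa - R0 powr bb \<le> ra powr aa - rb powr bb"
    by (rule key_iii[OF rb0 rbra rbR R0_pos R0_s hi])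
  moreover have "sqrt 5 * greedy_ratio = R0 powr aa - R0 powr bb" by (simp add: ratio_eq)
  ultimately have "sqrt 5 * greedy_ratio \<le> (\<Prod>r\<in>{np<..m}. 1 - aa / real r) - (\<Prod>r\<in>{np<..m}. 1 - bb / real r)"
    using PA PB by linarith
  moreover have "2 \<le> np" using np5 by simp
  ultimately show ?thesis using npm by blast
qed

lemma small_bound:
  fixes np m :: nat assumes "2 \<le> np"
  shows "(\<Prod>r\<in>{np<..m}. 1 - 0.382 / real r) - (\<Prod>r\<in>{np<..m}. 1 - 2.618 / real r)
     \<le> (\<Prod>r\<in>{np<..m}. 1 - aa / real r) - (\<Prod>r\<in>{np<..m}. 1 - bb / real r)"
proof -
  have "(\<Prod>r\<in>{np<..m}. 1 - 0.382 / real r) \<le> (\<Prod>r\<in>{np<..m}. 1 - aa / real r)"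
  proof (rule prod_mono)
    fix r assume "r \<in> {np<..m}"
    then have r: "3 \<le> real r" using assms by simp
    show "0 \<le> 1 - 0.382 / real r \<and> 1 - 0.382 / real r \<le> 1 - aa / real r"
      by (rule t4[OF r aa_bounds])
  qed
  moreover have "(\<Prod>r\<in>{np<..m}. 1 - bb / real r) \<le> (\<Prod>r\<in>{np<..m}. 1 - 2.618 / real r)"
  proof (rule prod_mono)
    fix r assume "r \<in> {np<..m}"
    then have r: "3 \<le> real r" using assms by simp
    show "0 \<le> 1 - bb / real r \<and> 1 - bb / real r \<le> 1 - 2.618 / real r"
      by (rule t5[OF r bb_bounds])
  qed
  ultimately show ?thesis by linarith
qed

lemma small_case:
  fixes m :: nat assumes "4 \<le> m" "m \<le> 11"
  shows "\<exists>np. 2 \<le> np \<and> np < m \<and>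
     sqrt 5 * greedy_ratio \<le> (\<Prod>r\<in>{np<..m}. 1 - aa / real r) - (\<Prod>r\<in>{np<..m}. 1 - bb / real r)"
proof -
  have g0: "0 \<le> greedy_ratio"
  proof -
    have "R0 powr bb \<le> R0 powr aa" using aa_bounds bb_bounds R0_pos R0_upper by (intro powr_mono') auto
    then show ?thesis unfolding ratio_eq by simp
  qed
  have sr: "sqrt 5 * greedy_ratio \<le> 2.2361 * 0.29"
    using s5_bounds(2) ratio_le g0 by (intro mult_mono) auto
  have c: "m = 4 \<or> m = 5 \<or> m = 6 \<or> m = 7 \<or> m = 8 \<or> m = 9 \<or> m = 10 \<or> m = 11" using assms by auto
  have key: "\<exists>np. 2 \<le> np \<and> np < m \<and> 2.2361 * 0.29 \<le>
      (\<Prod>r\<in>{np<..m}. 1 - 0.382 / real r) - (\<Prod>r\<in>{np<..m}. 1 - 2.618 / real r)"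
    using c
  proof (elim disjE)
    assume "m = 4" then show ?thesis by (intro exI[of _ 2]) (simp add: greaterThanAtMost_upt upt_rec)
  next
    assume "m = 5" then show ?thesis by (intro exI[of _ 2]) (simp add: greaterThanAtMost_upt upt_rec)
  next
    assume "m = 6" then show ?thesis by (intro exI[of _ 3]) (simp add: greaterThanAtMost_upt upt_rec)
  next
    assume "m = 7" then show ?thesis by (intro exI[of _ 3]) (simp add: greaterThanAtMost_upt upt_rec)
  next
    assume "m = 8" then show ?thesis by (intro exI[of _ 4]) (simp add: greaterThanAtMost_upt upt_rec)
  next
    assume "m = 9" then show ?thesis by (intro exI[of _ 4]) (simp add: greaterThanAtMost_upt upt_rec)
  next
    assume "m = 10" then show ?thesis by (intro exI[of _ 4]) (simp add: greaterThanAtMost_upt upt_rec)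
  next
    assume "m = 11" then show ?thesis by (intro exI[of _ 5]) (simp add: greaterThanAtMost_upt upt_rec)
  qed
  then obtain np where np: "2 \<le> np" "np < m" "2.2361 * 0.29 \<le>
      (\<Prod>r\<in>{np<..m}. 1 - 0.382 / real r) - (\<Prod>r\<in>{np<..m}. 1 - 2.618 / real r)" by blast
  show ?thesis using np small_bound[OF np(1), of m] sr by (intro exI[of _ np]) auto
qed

lemma mono_chain:
  fixes w :: "nat \<Rightarrow> real"
  assumes mono: "\<And>k. k < m \<Longrightarrow> w k \<le> w (Suc k)" and "j \<le> m"
  shows "w j \<le> w m"
proof -
  obtain d where m: "m = j + d" using assms(2) le_Suc_ex by blast
  have "w j \<le> w (j + d')" if "d' \<le> d" for d'
    using that
  proof (induction d')
    case 0 then show ?case by simp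
  next
    case (Suc d')
    then have "w j \<le> w (j + d')" by simp
    also have "w (j + d') \<le> w (Suc (j + d'))" using mono Suc.prems m by simp
    finally show ?case by simp
  qed
  then show ?thesis using m by simp
qed

lemma final_bound:
  fixes w v :: "nat \<Rightarrow> real" and m :: nat and Q :: real
  assumes rw: "\<And>k. k < m \<Longrightarrow> w k + (v k - 2 * w k) / real (m - k) \<le> w (Suc k)"
    and rv: "\<And>k. k < m \<Longrightarrow> v k + (w k - v k) / real (m - k) \<le> v (Suc k)"
    and mono: "\<And>k. k < m \<Longrightarrow> w k \<le> w (Suc k)"
    and w0: "0 \<le> w 0" and v0: "v 0 = w 0 + Q" and Q: "0 \<le> Q"
    and m0: "m = 0 \<Longrightarrow> Q \<le> w 0"
  shows "greedy_ratio * Q \<le> w m"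
proof -
  have g0: "0 \<le> greedy_ratio"
  proof -
    have "R0 powr bb \<le> R0 powr aa" using aa_bounds bb_bounds R0_pos R0_upper by (intro powr_mono') auto
    then show ?thesis unfolding ratio_eq by simp
  qed
  have g1: "greedy_ratio \<le> 29/100" using ratio_le by simp
  consider "m = 0" | "1 \<le> m" "m \<le> 3" | "4 \<le> m" by linarith
  then show ?thesis
  proof cases
    case 1
    have "greedy_ratio * Q \<le> 1 * Q" using g1 Q by (intro mult_right_mono) auto
    then show ?thesis using m0 1 by simp
  next
    case 2
    have mpos: "0 < real m" using 2 by simp
    have "w 0 + (v 0 - 2 * w 0) / real m \<le> w 1" using rw[of 0] 2 by simp
    moreover have "w 0 + (v 0 - 2 * w 0) / real m = w 0 * (1 - 1 / real m) + Q / real m"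
      using v0 mpos by (simp add: field_simps)
    moreover have "0 \<le> w 0 * (1 - 1 / real m)" using w0 2 by (intro mult_nonneg_nonneg) (auto simp: field_simps)
    ultimately have "Q / real m \<le> w 1" by linarith
    moreover have "greedy_ratio * Q \<le> Q / real m"
    proof -
      have "greedy_ratio * Q \<le> (1 / real m) * Q"
      proof (rule mult_right_mono)
        have "1 / 3 \<le> 1 / real m" using 2 by (intro divide_left_mono) auto
        then show "greedy_ratio \<le> 1 / real m" using g1 by linarith
      qed (use Q in simp)
      then show ?thesis by simp
    qed
    moreover have "w 1 \<le> w m" using mono_chain[of m w 1] mono 2 by auto
    ultimately show ?thesis by linarith
  next
    case 3
    obtain np where np: "2 \<le> np" "np < m"
      "sqrt 5 * greedy_ratio \<le> (\<Prod>r\<in>{np<..m}. 1 - aa / real r) - (\<Prod>r\<in>{np<..m}. 1 - bb / real r)"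
      using small_case[of m] general_case[of m] 3 by (cases "m \<le> 11") auto
    define Pa where "Pa = (\<Prod>r\<in>{np<..m}. 1 - aa / real r)"
    define Pb where "Pb = (\<Prod>r\<in>{np<..m}. 1 - bb / real r)"
    have rc: "(Pa * ((sqrt 5 - 1) / 2) + ((1 + sqrt 5) / 2) * Pb) / sqrt 5 * w 0 + (Pa - Pb) / sqrt 5 * v 0 \<le> w (m - np)"
      unfolding Pa_def Pb_def by (rule rec_closed[OF np(1,2) rw rv])
    have fac: "0 \<le> 1 - bb / real r" if "np < r" for r
    proof -
      have "3 \<le> real r" using that np by simp
      then have "0 \<le> 1 - bb / real r \<and> 1 - bb / real r \<le> 1 - 2.618 / real r" by (rule t5[OF _ bb_bounds])
      then show ?thesis by linarith
    qed
    have Pb0: "0 \<le> Pb" unfolding Pb_def using fac by (auto intro!: prod_nonneg)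
    have Pa0: "0 \<le> Pa" unfolding Pa_def
    proof (rule prod_nonneg)
      fix r assume "r \<in> {np<..m}"
      then have "3 \<le> real r" using np by simp
      then have "0 \<le> 1 - 0.382 / real r \<and> 1 - 0.382 / real r \<le> 1 - aa / real r" by (rule t4[OF _ aa_bounds])
      then show "0 \<le> 1 - aa / real r" by linarith
    qed
    have s0: "0 < sqrt (5::real)" by simp
    have al: "0 \<le> (Pa * ((sqrt 5 - 1) / 2) + ((1 + sqrt 5) / 2) * Pb) / sqrt 5"
      using Pa0 Pb0 s5_bounds by (intro divide_nonneg_pos add_nonneg_nonneg mult_nonneg_nonneg) auto
    have be: "greedy_ratio \<le> (Pa - Pb) / sqrt 5"
      using np(3) s0 unfolding Pa_def[symmetric] Pb_def[symmetric] by (simp add: field_simps)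
    have be0: "0 \<le> (Pa - Pb) / sqrt 5" using be g0 by linarith
    define A0 where "A0 = (Pa * ((sqrt 5 - 1) / 2) + ((1 + sqrt 5) / 2) * Pb) / sqrt 5"
    define B0 where "B0 = (Pa - Pb) / sqrt 5"
    have "greedy_ratio * Q \<le> B0 * Q" unfolding B0_def using be Q by (intro mult_right_mono) auto
    also have "\<dots> \<le> A0 * w 0 + B0 * v 0"
    proof -
      have "0 \<le> A0 * w 0" unfolding A0_def using al w0 by (rule mult_nonneg_nonneg)
      moreover have "0 \<le> B0 * w 0" unfolding B0_def using be0 w0 by (rule mult_nonneg_nonneg)
      moreover have "A0 * w 0 + B0 * v 0 = A0 * w 0 + B0 * w 0 + B0 * Q" unfolding v0 by (simp add: distrib_left)
      ultimately show ?thesis by linarith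
    qed
    also have "\<dots> = (Pa * ((sqrt 5 - 1) / 2) + ((1 + sqrt 5) / 2) * Pb) / sqrt 5 * w 0 + (Pa - Pb) / sqrt 5 * v 0"
      by (simp add: A0_def B0_def)
    also have "\<dots> \<le> w (m - np)" by (rule rc)
    also have "\<dots> \<le> w m" using mono_chain[of m w "m - np"] mono by auto
    finally show ?thesis .
  qed
qed

context setting
begin

lemma opt_empty: "card N = 0 \<Longrightarrow> welfare n f Opt \<le> w 0"
proof -
  assume "card N = 0"
  then have "N = {}" using finN by simp
  then have "welfare n f Opt = W []"
    unfolding welfare_def W_def using optN by (intro sum.cong) (auto simp: greedy_alloc_Nil)
  then show ?thesis by (simp add: w0)
qed

lemma main_bound: "greedy_ratio * welfare n f Opt \<le> expected_greedy N n f ch"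
proof -
  have "greedy_ratio * welfare n f Opt \<le> w (card N)"
  proof (rule final_bound[where v = v])
    show "\<And>k. k < card N \<Longrightarrow> w k + (v k - 2 * w k) / real (card N - k) \<le> w (Suc k)"
      by (rule rec_w(1))
    show "\<And>k. k < card N \<Longrightarrow> v k + (w k - v k) / real (card N - k) \<le> v (Suc k)"
      by (rule rec_v)
    show "\<And>k. k < card N \<Longrightarrow> w k \<le> w (Suc k)" by (rule rec_w(2))
    show "0 \<le> w 0" using W0_nonneg by (simp add: w0)
    show "v 0 = w 0 + welfare n f Opt" by (simp add: v0 w0)
    show "0 \<le> welfare n f Opt" by (rule opt_nonneg)
    show "card N = 0 \<Longrightarrow> welfare n f Opt \<le> w 0" by (rule opt_empty)
  qed
  then show ?thesis by (simp add: wm)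
qed

end

theorem theorem3:
  fixes N :: "'a set" and n :: nat and f :: "nat \<Rightarrow> 'a set \<Rightarrow> real"
    and ch :: "'a list \<Rightarrow> (nat \<Rightarrow> 'a set) \<Rightarrow> 'a \<Rightarrow> nat option"
    and Opt :: "nat \<Rightarrow> 'a set"
  assumes "finite N"
    and "\<forall>j<n. submodular_on N (f j)"
    and "\<forall>j<n. \<forall>A\<subseteq>N. 0 \<le> f j A"
    and "greedy_rule n f ch"
    and "\<forall>j<n. Opt j \<subseteq> N"
    and "\<forall>j<n. \<forall>k<n. j \<noteq> k \<longrightarrow> Opt j \<inter> Opt k = {}"
  shows "expected_greedy N n f ch \<ge> greedy_ratio * welfare n f Opt"
proof -
  interpret S: setting N n f ch Opt
    by (unfold_locales) (use assms in auto)
  show ?thesis using S.main_bound by simp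
qed

end
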